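(* Assume (F1)–(F3), let $\tau\ge0$, $c\ge0$, and suppose $f'(w)<0$ for $w_0\le w<1$. If $w$ is a solution of problem (P) with these $\tau,c$ such that $w'(x)\le0$ for all $x\in\mathbb R$, then $w'(x)<0$ for all $x\in\mathbb R$.
   Context: $f:\mathbb R\to\mathbb R$ is $C^4$ with bounded derivatives and satisfies: (F1) $f(w)>0$ for $0\le w<1$, $f(1)=0$, $f'(1)>-1$; (F2) $f(0)>1$, $f'(0)>0$, and $f(w)>1$ for $0\le w<w_*$ for some $w_*\in(0,1)$; (F3) the equation $f(w)=1-w$ has exactly one solution $w_0$ in $(0,1)$, and $f'(w_0)<-1$; hence $f(w)>1-w$ for $0\le w<w_0$ and $f(w)<1-w$ for $w_0<w<1$. Problem (P) for given $\tau\ge0$, $c\in\mathbb R$: find $w\in C^2(\mathbb R)$ with $w''(x)+cw'(x)+w(x)\big(1-w(x)-f(w(x+c\tau))\big)=0$ for all $x$, and $w(-\infty)=1$, $w(+\infty)=0$. *)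

theory Defs
  imports "HOL-Analysis.Analysis"
begin

definition C4_bdd_deriv :: "(real \<Rightarrow> real) \<Rightarrow> bool" where
  "C4_bdd_deriv f \<longleftrightarrow>
     (\<forall>k<4. \<forall>x. (deriv ^^ k) f differentiable at x) \<and>
     continuous_on UNIV ((deriv ^^ 4) f) \<and>
     (\<forall>k\<in>{1..4}. bounded (range ((deriv ^^ k) f)))"

definition hypF1 :: "(real \<Rightarrow> real) \<Rightarrow> bool" where
  "hypF1 f \<longleftrightarrow> (\<forall>w. 0 \<le> w \<and> w < 1 \<longrightarrow> f w > 0) \<and> f 1 = 0 \<and> deriv f 1 > -1"

definition hypF2 :: "(real \<Rightarrow> real) \<Rightarrow> bool" where
  "hypF2 f \<longleftrightarrow> f 0 > 1 \<and> deriv f 0 > 0 \<and>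
     (\<exists>ws. 0 < ws \<and> ws < 1 \<and> (\<forall>w. 0 \<le> w \<and> w < ws \<longrightarrow> f w > 1))"

definition hypF3 :: "(real \<Rightarrow> real) \<Rightarrow> real \<Rightarrow> bool" where
  "hypF3 f w0 \<longleftrightarrow> 0 < w0 \<and> w0 < 1 \<and> f w0 = 1 - w0 \<and>
     (\<forall>w. 0 < w \<and> w < 1 \<and> f w = 1 - w \<longrightarrow> w = w0) \<and> deriv f w0 < -1"

definition solves_P :: "(real \<Rightarrow> real) \<Rightarrow> real \<Rightarrow> real \<Rightarrow> (real \<Rightarrow> real) \<Rightarrow> bool" where
  "solves_P f \<tau> c w \<longleftrightarrow>
     (\<forall>x. w differentiable at x) \<and> (\<forall>x. deriv w differentiable at x) \<and>
     continuous_on UNIV (deriv (deriv w)) \<and>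
     (\<forall>x. deriv (deriv w) x + c * deriv w x + w x * (1 - w x - f (w (x + c * \<tau>))) = 0) \<and>
     (w \<longlongrightarrow> 1) at_bot \<and> (w \<longlongrightarrow> 0) at_top"

end

theory Submission
  imports Defs
begin

lemma gronwall0:
  fixes E E' :: "real \<Rightarrow> real"
  assumes d: "\<And>x. (E has_real_derivative E' x) (at x)"
    and b: "\<And>x. \<bar>E' x\<bar> \<le> K * E x" and nn: "\<And>x. E x \<ge> 0" and z: "E x0 = 0"
  shows "E x = 0"
proof (cases "x0 \<le> x")
  case True
  have "(\<lambda>y. E y * exp (-K*y)) x0 \<ge> (\<lambda>y. E y * exp (-K*y)) x"
  proof (rule DERIV_nonpos_imp_nonincreasing[OF True])
    fix y
    have "((\<lambda>y. E y * exp (-K*y)) has_real_derivative E' y * exp (-K*y) + E y * (exp (-K*y) * (-K))) (at y)"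
      by (auto intro!: derivative_eq_intros d)
    moreover have "E' y * exp (-K*y) + E y * (exp (-K*y) * (-K)) = (E' y - K * E y) * exp (-K*y)"
      by (simp add: algebra_simps)
    moreover have "E' y - K * E y \<le> 0" using b[of y] by linarith
    ultimately show "\<exists>l. ((\<lambda>y. E y * exp (-K*y)) has_real_derivative l) (at y) \<and> l \<le> 0"
      by (metis mult_nonpos_nonneg exp_ge_zero)
  qed
  then have "E x * exp (-K*x) \<le> 0" using z by simp
  then show ?thesis using nn[of x] by (simp add: mult_le_0_iff)
next
  case False
  then have le: "x \<le> x0" by simp
  have "(\<lambda>y. E y * exp (K*y)) x \<le> (\<lambda>y. E y * exp (K*y)) x0"
  proof (rule DERIV_nonneg_imp_nondecreasing[OF le])
    fix y
    have "((\<lambda>y. E y * exp (K*y)) has_real_derivative E' y * exp (K*y) + E y * (exp (K*y) * K)) (at y)"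
      by (auto intro!: derivative_eq_intros d)
    moreover have "E' y * exp (K*y) + E y * (exp (K*y) * K) = (E' y + K * E y) * exp (K*y)"
      by (simp add: algebra_simps)
    moreover have "E' y + K * E y \<ge> 0" using b[of y] by linarith
    ultimately show "\<exists>l. ((\<lambda>y. E y * exp (K*y)) has_real_derivative l) (at y) \<and> l \<ge> 0"
      by (metis zero_le_mult_iff exp_ge_zero)
  qed
  then have "E x * exp (K*x) \<le> 0" using z by simp
  then show ?thesis using nn[of x] by (simp add: mult_le_0_iff)
qed

lemma am_gm: "2 * \<bar>p\<bar> * \<bar>q\<bar> \<le> p^2 + (q::real)^2"
proof -
  have "0 \<le> (\<bar>p\<bar> - \<bar>q\<bar>)^2" by simp
  then show ?thesis unfolding power2_diff by simp
qed

lemma uniq: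
  fixes w :: "real \<Rightarrow> real"
  assumes dw: "\<And>x. (w has_real_derivative deriv w x) (at x)"
    and dv: "\<And>x. (deriv w has_real_derivative deriv (deriv w) x) (at x)"
    and bd: "\<And>x. \<bar>deriv (deriv w) x + c * deriv w x\<bar> \<le> L * \<bar>w x - a\<bar>"
    and c: "c \<ge> 0" and L: "L \<ge> 0" and z1: "deriv w x0 = 0" and z2: "w x0 = a"
  shows "w x = a"
proof -
  define E where "E = (\<lambda>x. (w x - a)^2 + (deriv w x)^2)"
  define E' where "E' = (\<lambda>x. 2 * (w x - a) * deriv w x + 2 * deriv w x * deriv (deriv w) x)"
  have "E x = 0"
  proof (rule gronwall0[where E = E and x = x and E' = E' and K = "1 + L + 2*c" and x0 = x0])
    fix x
    show "(E has_real_derivative E' x) (at x)" unfolding E_def E'_def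
      by (auto intro!: derivative_eq_intros dw dv)
    show "E x \<ge> 0" unfolding E_def by simp
    let ?p = "w x - a" and ?q = "deriv w x" and ?r = "deriv (deriv w) x"
    have r0: "\<bar>?r\<bar> \<le> \<bar>?r + c * ?q\<bar> + \<bar>c * ?q\<bar>" by linarith
    have r: "\<bar>?r\<bar> \<le> c * \<bar>?q\<bar> + L * \<bar>?p\<bar>" using r0 bd[of x] c by (simp add: abs_mult)
    have am: "2 * \<bar>?p\<bar> * \<bar>?q\<bar> \<le> ?p^2 + ?q^2" by (rule am_gm)
    have "\<bar>E' x\<bar> \<le> 2 * \<bar>?p\<bar> * \<bar>?q\<bar> + 2 * \<bar>?q\<bar> * \<bar>?r\<bar>"
      proof -
      have e: "\<bar>2 * w x - 2 * a\<bar> = 2 * \<bar>w x - a\<bar>" by (simp add: abs_if)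
      show ?thesis unfolding E'_def using abs_triangle_ineq[of "2 * ?p * ?q" "2 * ?q * ?r"] e by (simp add: abs_mult)
    qed
    also have "\<dots> \<le> 2 * \<bar>?p\<bar> * \<bar>?q\<bar> + 2 * \<bar>?q\<bar> * (c * \<bar>?q\<bar> + L * \<bar>?p\<bar>)"
      using r by (simp add: mult_left_mono)
    also have "\<dots> = (1 + L) * (2 * \<bar>?p\<bar> * \<bar>?q\<bar>) + 2 * c * ?q^2"
      by (simp add: algebra_simps power2_eq_square)
    also have "\<dots> \<le> (1 + L) * (?p^2 + ?q^2) + 2 * c * (?p^2 + ?q^2)"
      using am L c by (intro add_mono mult_left_mono) auto
    also have "\<dots> = (1 + L + 2*c) * E x" unfolding E_def by (simp add: algebra_simps)
    finally show "\<bar>E' x\<bar> \<le> (1 + L + 2*c) * E x" .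
  next
    show "E x0 = 0" unfolding E_def using z1 z2 by simp
  qed
  then show ?thesis unfolding E_def by (simp add: add_nonneg_eq_0_iff)
qed


theorem lemma3p1:
  fixes f w :: "real \<Rightarrow> real" and \<tau> c w0 :: real
  assumes "C4_bdd_deriv f" and "hypF1 f" and "hypF2 f" and "hypF3 f w0"
    and "\<tau> \<ge> 0" and "c \<ge> 0"
    and "\<forall>v. w0 \<le> v \<and> v < 1 \<longrightarrow> deriv f v < 0"
    and "solves_P f \<tau> c w"
    and "\<forall>x. deriv w x \<le> 0"
  shows "\<forall>x. deriv w x < 0"
proof (rule ccontr)
  assume "\<not> (\<forall>x. deriv w x < 0)"
  then obtain x0 where x0: "deriv w x0 = 0" using assms(9) by (meson not_less order.antisym)
  define s where "s = c * \<tau>"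
  have s0: "s \<ge> 0" unfolding s_def using assms(5,6) by simp
  have vle: "\<And>x. deriv w x \<le> 0" using assms(9) by simp
  have dw: "\<And>x. (w has_real_derivative deriv w x) (at x)"
    using assms(8) unfolding solves_P_def by (simp add: DERIV_deriv_iff_real_differentiable)
  have dv: "\<And>x. (deriv w has_real_derivative deriv (deriv w) x) (at x)"
    using assms(8) unfolding solves_P_def by (simp add: DERIV_deriv_iff_real_differentiable)
  have eq: "deriv (deriv w) x = - (c * deriv w x) - w x * (1 - w x - f (w (x + s)))" for x
  proof -
    have "deriv (deriv w) x + c * deriv w x + w x * (1 - w x - f (w (x + c * \<tau>))) = 0"
      using assms(8) unfolding solves_P_def by blast
    then show ?thesis unfolding s_def by linarith
  qed
  have lim1: "(w \<longlongrightarrow> 1) at_bot" and lim0: "(w \<longlongrightarrow> 0) at_top"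
    using assms(8) unfolding solves_P_def by auto
  have df: "\<And>x. (f has_real_derivative deriv f x) (at x)"
  proof -
    fix x
    have "\<forall>k<4. \<forall>x. (deriv ^^ k) f differentiable at x" using assms(1) unfolding C4_bdd_deriv_def by blast
    then have "(deriv ^^ 0) f differentiable at x" by (metis zero_less_numeral)
    then show "(f has_real_derivative deriv f x) (at x)" by (simp add: DERIV_deriv_iff_real_differentiable)
  qed
  have "\<forall>k\<in>{1..4}. bounded (range ((deriv ^^ k) f))" using assms(1) unfolding C4_bdd_deriv_def by blast
  then have "bounded (range ((deriv ^^ 1) f))" by (metis atLeastAtMost_iff le_numeral_extra(4) one_le_numeral)
  then have "bounded (range (deriv f))" by simp
  then obtain B where B: "\<And>x. \<bar>deriv f x\<bar> \<le> B" unfolding bounded_real by auto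
  have B0: "B \<ge> 0" using B[of 0] by linarith
  have lip: "\<bar>f x - f y\<bar> \<le> B * \<bar>x - y\<bar>" for x y
  proof -
    have "\<bar>f b - f a\<bar> \<le> B * \<bar>b - a\<bar>" if ab: "a < b" for a b
    proof -
      obtain z where "f b - f a = (b - a) * deriv f z" using MVT2[OF ab df] by blast
      then show ?thesis using B[of z] ab by (simp add: abs_mult mult_right_mono mult.commute)
    qed
    note h = this
    show ?thesis
    proof (cases x y rule: linorder_cases)
      case less then show ?thesis using h[of x y] by (simp add: abs_minus_commute)
    next
      case greater then show ?thesis using h[of y x] by (simp add: abs_minus_commute)
    qed simp
  qed
  have mono: "\<And>x y. x \<le> y \<Longrightarrow> w y \<le> w x"
    using DERIV_nonpos_imp_nonincreasing dw vle by blast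
  have wge0: "0 \<le> w x" for x
  proof (rule tendsto_upperbound[OF lim0])
    show "\<forall>\<^sub>F y in at_top. w y \<le> w x" using mono unfolding eventually_at_top_linorder by blast
  qed simp
  have wle1: "w x \<le> 1" for x
  proof (rule tendsto_lowerbound[OF lim1])
    show "\<forall>\<^sub>F y in at_bot. w x \<le> w y" using mono unfolding eventually_at_bot_linorder by blast
  qed simp
  have fpos: "\<And>y. 0 \<le> y \<Longrightarrow> y < 1 \<Longrightarrow> f y > 0" using assms(2) unfolding hypF1_def by blast
  have f1: "f 1 = 0" using assms(2) unfolding hypF1_def by blast
  have fbd: "\<bar>f y\<bar> \<le> \<bar>f 0\<bar> + B" if "0 \<le> y" "y \<le> 1" for y
  proof -
    have "B * \<bar>y - 0\<bar> \<le> B" using that B0 by (simp add: mult_left_le)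
    then show ?thesis using lip[of y 0] by linarith
  qed
  have w0: "0 < w0" "w0 < 1" "f w0 = 1 - w0" and w0u: "\<And>y. 0 < y \<Longrightarrow> y < 1 \<Longrightarrow> f y = 1 - y \<Longrightarrow> y = w0"
    using assms(4) unfolding hypF3_def by auto
  have f0: "f 0 > 1" using assms(3) unfolding hypF2_def by auto
  have fermat: "deriv (deriv w) x = 0" if "deriv w x = 0" for x
    using DERIV_local_max[OF dv[of x], of 1] vle that by auto
  have geW0: "w0 \<le> b" if "0 \<le> b" "b < 1" "f b \<le> 1 - b" for b
  proof (rule ccontr)
    assume "\<not> w0 \<le> b" then have bw: "b < w0" by simp
    show False
    proof (cases "f b = 1 - b")
      case True
      then have "b \<noteq> 0" using f0 by auto
      then show False using w0u[of b] True that bw by auto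
    next
      case False
      then have lt: "f b - (1 - b) < 0" using that by simp
      have "\<exists>y. 0 \<le> y \<and> y \<le> b \<and> f y - (1 - y) = 0"
        by (rule IVT2) (use lt f0 that DERIV_isCont[OF df] in \<open>auto intro!: continuous_intros\<close>)
      then obtain y where y: "0 \<le> y" "y \<le> b" "f y = 1 - y" by auto
      have "y \<noteq> 0" using y f0 by auto
      moreover have "y \<noteq> b" using y False by auto
      ultimately show False using w0u[of y] y bw that by auto
    qed
  qed
  have step: "deriv w (x + s) = 0 \<and> w0 \<le> w (x + s)" if vx: "deriv w x = 0" and ax: "w x > 0" for x
  proof -
    define a where "a = w x"
    define b where "b = w (x + s)"
    have ba: "b \<le> a" unfolding a_def b_def using mono s0 by simp
    have b0: "0 \<le> b" unfolding b_def using wge0 by simp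
    have a1: "a \<le> 1" unfolding a_def using wle1 by simp
    have a0: "a > 0" using ax a_def by simp
    have "0 = - (c * 0) - a * (1 - a - f b)" using eq[of x] fermat[OF vx] vx unfolding a_def b_def by simp
    then have "a * (1 - a - f b) = 0" by simp
    then have fb: "f b = 1 - a" using a0 by simp
    show ?thesis
    proof (cases "a = 1")
      case True
      then have "f b = 0" using fb by simp
      then have "b = 1" using fpos[of b] b0 ba True by force
      then have "w (x + s) = 1" unfolding b_def .
      then have "deriv w (x + s) = 0"
        using DERIV_local_max[OF dw[of "x + s"], of 1] wle1 by auto
      then show ?thesis using \<open>b = 1\<close> w0 b_def by simp
    next
      case False
      then have a1': "a < 1" using a1 by simp
      have wb: "w0 \<le> b" using geW0[of b] b0 ba a1' fb by simp
      have fdb: "deriv f b < 0" using assms(7) wb ba a1' by simp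
      show ?thesis
      proof (rule ccontr)
        assume "\<not> ?thesis"
        then have v1: "deriv w (x + s) < 0" using wb b_def vle[of "x + s"] by (auto simp: less_le)
        have ext: "deriv (deriv w) = (\<lambda>y. - (c * deriv w y) - w y * (1 - w y - f (w (y + s))))"
          using eq by (rule ext)
        have dws: "((\<lambda>y. w (y + s)) has_real_derivative deriv w (x + s)) (at x)"
          using DERIV_shift[of w "deriv w (x + s)" x s] dw by simp
        have dfw: "((\<lambda>y. f (w (y + s))) has_real_derivative deriv f b * deriv w (x + s)) (at x)"
          using DERIV_chain2[OF df[of "w (x + s)"] dws] unfolding b_def .
        have "((\<lambda>y. - (c * deriv w y) - w y * (1 - w y - f (w (y + s)))) has_real_derivative
            - (c * deriv (deriv w) x) - (deriv w x * (1 - w x - f (w (x + s))) + w x * (0 - deriv w x - deriv f b * deriv w (x + s)))) (at x)"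
          by (auto intro!: derivative_eq_intros dw dv dfw)
        then have D: "(deriv (deriv w) has_real_derivative a * deriv f b * deriv w (x + s)) (at x)"
          unfolding ext[symmetric] using vx fermat[OF vx] unfolding a_def by (simp add: mult.assoc)
        have "a * deriv f b * deriv w (x + s) > 0"
          using a0 fdb v1 by (simp add: mult_pos_neg mult_neg_neg)
        from DERIV_pos_inc_right[OF D this] obtain d where d: "d > 0"
          and dd: "\<And>h. h > 0 \<Longrightarrow> h < d \<Longrightarrow> deriv (deriv w) x < deriv (deriv w) (x + h)" by blast
        have "x < x + d/2" using d by simp
        from MVT2[OF this dv] obtain z where z: "x < z" "z < x + d/2"
          "deriv w (x + d/2) - deriv w x = (x + d/2 - x) * deriv (deriv w) z" by blast
        have "deriv (deriv w) x < deriv (deriv w) (x + (z - x))" using z d by (intro dd) auto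
        then have "deriv (deriv w) z > 0" using fermat[OF vx] by simp
        then have "d * deriv (deriv w) z > 0" using d by simp
        then have "deriv w (x + d/2) > 0" using z vx d by simp
        then show False using vle[of "x + d/2"] by simp
      qed
    qed
  qed
  have constcontra: False if ca: "\<And>x. w x = a" for a
  proof -
    have "w = (\<lambda>x. a)" using ca by auto
    then have "((\<lambda>x::real. a) \<longlongrightarrow> 1) at_bot" "((\<lambda>x::real. a) \<longlongrightarrow> 0) at_top" using lim1 lim0 by auto
    then have "a = 1" "a = 0" by (simp_all add: tendsto_const_iff)
    then show False by simp
  qed
  have eq2: "deriv (deriv w) y + c * deriv w y = - (w y * (1 - w y - f (w (y + s))))" for y
    using eq[of y] by linarith
  show False
  proof (cases "w x0 = 0")
    case True
    have "w x = 0" for x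
    proof (rule uniq[OF dw dv _ assms(6) _ x0 True, of "2 + \<bar>f 0\<bar> + B"])
      fix y
      have fb: "\<bar>f (w (y + s))\<bar> \<le> \<bar>f 0\<bar> + B" using fbd wge0 wle1 by blast
      have "\<bar>1 - w y - f (w (y + s))\<bar> \<le> 2 + \<bar>f 0\<bar> + B"
        using fb wge0[of y] wle1[of y] by linarith
      then have "\<bar>w y\<bar> * \<bar>1 - w y - f (w (y + s))\<bar> \<le> \<bar>w y\<bar> * (2 + \<bar>f 0\<bar> + B)"
        by (intro mult_left_mono) auto
      then show "\<bar>deriv (deriv w) y + c * deriv w y\<bar> \<le> (2 + \<bar>f 0\<bar> + B) * \<bar>w y - 0\<bar>"
        unfolding eq2 by (simp add: abs_mult mult.commute)
    qed (use B0 in auto)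
    then show False using constcontra by blast
  next
    case False
    then have ax0: "w x0 > 0" using wge0[of x0] by simp
    show False
    proof (cases "s = 0")
      case True
      define a where "a = w x0"
      have a0: "0 \<le> a" "a \<le> 1" unfolding a_def using wge0 wle1 by auto
      have Fa: "a * (1 - a - f a) = 0" using eq[of x0] fermat[OF x0] x0 True unfolding a_def by simp
      have "w x = a" for x
      proof (rule uniq[OF dw dv _ assms(6) _ x0 a_def[symmetric], of "3 + \<bar>f 0\<bar> + 2 * B"])
        fix y
        define u where "u = w y"
        have u0: "0 \<le> u" "u \<le> 1" unfolding u_def using wge0 wle1 by auto
        have id: "u * (1 - u - f u) - a * (1 - a - f a) = (u - a) * (1 - u - a - f u) - a * (f u - f a)"
          by (simp add: algebra_simps)
        have fb: "\<bar>f u\<bar> \<le> \<bar>f 0\<bar> + B" using fbd u0 by blast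
        have "\<bar>1 - u - a - f u\<bar> \<le> 3 + \<bar>f 0\<bar> + B" using fb u0 a0 by linarith
        then have t1: "\<bar>(u - a) * (1 - u - a - f u)\<bar> \<le> \<bar>u - a\<bar> * (3 + \<bar>f 0\<bar> + B)"
          unfolding abs_mult by (intro mult_left_mono) auto
        have "\<bar>a * (f u - f a)\<bar> \<le> 1 * \<bar>f u - f a\<bar>" unfolding abs_mult using a0
          by (intro mult_right_mono) auto
        then have t2: "\<bar>a * (f u - f a)\<bar> \<le> B * \<bar>u - a\<bar>" using lip[of u a] by (metis mult_1 order_trans)
        have "\<bar>deriv (deriv w) y + c * deriv w y\<bar> = \<bar>u * (1 - u - f u) - a * (1 - a - f a)\<bar>"
          unfolding eq2 Fa using True u_def by simp
        also have "\<dots> \<le> \<bar>u - a\<bar> * (3 + \<bar>f 0\<bar> + B) + B * \<bar>u - a\<bar>"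
          unfolding id using t1 t2 by linarith
        also have "\<dots> = (3 + \<bar>f 0\<bar> + 2 * B) * \<bar>w y - a\<bar>" unfolding u_def by (simp add: algebra_simps)
        finally show "\<bar>deriv (deriv w) y + c * deriv w y\<bar> \<le> (3 + \<bar>f 0\<bar> + 2 * B) * \<bar>w y - a\<bar>" .
      qed (use B0 in auto)
      then show False using constcontra by blast
    next
      case False
      then have sp: "s > 0" using s0 by simp
      have P: "deriv w (x0 + real n * s) = 0 \<and> w (x0 + real n * s) > 0" for n
      proof (induction n)
        case 0 then show ?case using x0 ax0 by simp
      next
        case (Suc n)
        have e: "x0 + real (Suc n) * s = x0 + real n * s + s" by (simp add: algebra_simps)
        show ?case unfolding e using step[of "x0 + real n * s"] Suc w0(1) by auto
      qed
      have ge: "w (x0 + real (Suc n) * s) \<ge> w0" for n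
      proof -
        have e: "x0 + real (Suc n) * s = x0 + real n * s + s" by (simp add: algebra_simps)
        show ?thesis unfolding e using step[of "x0 + real n * s"] P[of n] by auto
      qed
      have "\<forall>\<^sub>F y in at_top. w y < w0" using order_tendstoD(2)[OF lim0 w0(1)] .
      then obtain N where N: "\<And>y. y \<ge> N \<Longrightarrow> w y < w0" unfolding eventually_at_top_linorder by blast
      obtain n where n: "N - x0 < real n * s" using ex_less_of_nat_mult[OF sp] by blast
      have "real n * s \<le> real (Suc n) * s" using sp by (simp add: mult_right_mono)
      then have "x0 + real (Suc n) * s \<ge> N" using n by linarith
      then show False using N ge[of n] by fastforce
    qed
  qed
qed

end
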